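(* Assume the Continuum Hypothesis. Then there exists a maximal cofinitary group $G \le \mathrm{Sym}(\mathbb{N})$ such that every countable group embeds (as an abstract group) into $G$.
   Context: $\mathrm{Sym}(\mathbb{N})$ is the group of bijections $\mathbb{N}\to\mathbb{N}$ under composition. A permutation is cofinitary if it is the identity or has only finitely many fixed points. A subgroup of $\mathrm{Sym}(\mathbb{N})$ is cofinitary if all its elements are cofinitary, and maximal cofinitary if it is cofinitary and not properly contained in another cofinitary subgroup. *)

theory Defs
  imports Complex_Main "HOL-Library.Equipollence" "HOL-Algebra.Bij"
begin

definition CH :: bool where
  "CH \<longleftrightarrow> (\<forall>A :: real set. countable A \<or> A \<approx> (UNIV :: real set))"

abbreviation SymN :: "(nat \<Rightarrow> nat) monoid" where
  "SymN \<equiv> BijGroup (UNIV :: nat set)"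

definition cofinitary :: "(nat \<Rightarrow> nat) \<Rightarrow> bool" where
  "cofinitary f \<longleftrightarrow> f = id \<or> finite {n. f n = n}"

definition cofinitary_group :: "(nat \<Rightarrow> nat) set \<Rightarrow> bool" where
  "cofinitary_group G \<longleftrightarrow> subgroup G SymN \<and> (\<forall>f\<in>G. cofinitary f)"

definition maximal_cofinitary_group :: "(nat \<Rightarrow> nat) set \<Rightarrow> bool" where
  "maximal_cofinitary_group G \<longleftrightarrow> cofinitary_group G \<and>
     (\<forall>H. cofinitary_group H \<and> G \<subseteq> H \<longrightarrow> H = G)"

end

theory Submission
  imports Defs "HOL-Analysis.Abstract_Topology_2"
begin

abbreviation iv :: "(nat \<Rightarrow> nat) \<Rightarrow> nat \<Rightarrow> nat" where "iv f \<equiv> inv_into UNIV f"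

definition pgrp :: "(nat \<Rightarrow> nat) set \<Rightarrow> bool" where
  "pgrp X \<longleftrightarrow> (\<forall>f\<in>X. bij f) \<and> id \<in> X \<and> (\<forall>f\<in>X. \<forall>g\<in>X. f \<circ> g \<in> X) \<and> (\<forall>f\<in>X. iv f \<in> X)"

lemma carrier_SymN: "carrier SymN = {f. bij f}"
  by (auto simp: BijGroup_def Bij_def)

lemma mult_SymN: "bij f \<Longrightarrow> bij g \<Longrightarrow> f \<otimes>\<^bsub>SymN\<^esub> g = f \<circ> g"
  by (auto simp: BijGroup_def Bij_def compose_def)

lemma one_SymN: "\<one>\<^bsub>SymN\<^esub> = id"
  by (auto simp: BijGroup_def)

lemma inv_SymN: "bij f \<Longrightarrow> inv\<^bsub>SymN\<^esub> f = iv f"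
  by (auto simp: inv_BijGroup Bij_def)

lemma subgroup_SymN_iff: "subgroup X SymN \<longleftrightarrow> pgrp X"
proof
  assume s: "subgroup X SymN"
  then have sub: "X \<subseteq> {f. bij f}" using subgroup.subset carrier_SymN by blast
  show "pgrp X" unfolding pgrp_def
  proof (intro conjI ballI)
    fix f assume "f \<in> X" then show "bij f" using sub by auto
  next
    show "id \<in> X" using subgroup.one_closed[OF s] one_SymN by simp
  next
    fix f g assume "f \<in> X" "g \<in> X"
    moreover have "bij f" "bij g" using sub \<open>f \<in> X\<close> \<open>g \<in> X\<close> by auto
    ultimately show "f \<circ> g \<in> X" using subgroup.m_closed[OF s, of f g] mult_SymN by metis
  next
    fix f assume "f \<in> X" moreover have "bij f" using sub \<open>f \<in> X\<close> by auto
    ultimately show "iv f \<in> X" using subgroup.m_inv_closed[OF s, of f] inv_SymN by metis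
  qed
next
  assume p: "pgrp X"
  show "subgroup X SymN"
  proof
    show "X \<subseteq> carrier SymN" using p by (auto simp: pgrp_def carrier_SymN)
    fix f g assume "f \<in> X" "g \<in> X"
    then show "f \<otimes>\<^bsub>SymN\<^esub> g \<in> X" using p by (auto simp: pgrp_def mult_SymN)
  next
    show "\<one>\<^bsub>SymN\<^esub> \<in> X" using p by (simp add: pgrp_def one_SymN)
  next
    fix f assume "f \<in> X" then show "inv\<^bsub>SymN\<^esub> f \<in> X" using p by (auto simp: pgrp_def inv_SymN)
  qed
qed

definition Fix :: "(nat \<Rightarrow> nat) \<Rightarrow> nat set" where "Fix f = {x. f x = x}"

definition good :: "(nat \<Rightarrow> nat) set \<Rightarrow> (nat \<Rightarrow> nat) set \<Rightarrow> bool \<Rightarrow> (nat \<Rightarrow> nat) \<Rightarrow> bool" where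
  "good H A t x \<longleftrightarrow> x \<in> (if t then H else A) \<and> x \<noteq> id"

fun alt :: "(nat \<Rightarrow> nat) set \<Rightarrow> (nat \<Rightarrow> nat) set \<Rightarrow> (bool \<times> (nat \<Rightarrow> nat)) list \<Rightarrow> bool" where
  "alt H A [] = True"
| "alt H A [(t,x)] = good H A t x"
| "alt H A ((t,x)#(t',y)#xs) = (good H A t x \<and> t \<noteq> t' \<and> alt H A ((t',y)#xs))"

fun evalN :: "(bool \<times> (nat \<Rightarrow> nat)) list \<Rightarrow> nat \<Rightarrow> nat" where
  "evalN [] = id"
| "evalN (a#xs) = snd a \<circ> evalN xs"

lemma evalN_append: "evalN (xs @ ys) = evalN xs \<circ> evalN ys"
  by (induction xs) auto

lemma alt_Cons: "alt H A (a#xs) \<longleftrightarrow> good H A (fst a) (snd a) \<and> alt H A xs \<and> (xs \<noteq> [] \<longrightarrow> fst a \<noteq> fst (hd xs))"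
  by (cases a; cases xs) auto

lemma alt_append: "alt H A (xs @ ys) \<longleftrightarrow> alt H A xs \<and> alt H A ys \<and> (xs \<noteq> [] \<and> ys \<noteq> [] \<longrightarrow> fst (last xs) \<noteq> fst (hd ys))"
  by (induction xs) (auto simp: alt_Cons)

fun lmul :: "bool \<times> (nat \<Rightarrow> nat) \<Rightarrow> (bool \<times> (nat \<Rightarrow> nat)) list \<Rightarrow> (bool \<times> (nat \<Rightarrow> nat)) list" where
  "lmul (t,y) [] = (if y = id then [] else [(t,y)])"
| "lmul (t,y) ((t',x)#xs) = (if t = t' then (if y \<circ> x = id then xs else (t, y \<circ> x)#xs)
      else (if y = id then (t',x)#xs else (t,y)#(t',x)#xs))"

lemma lmul_eval: "evalN (lmul (t,y) xs) = y \<circ> evalN xs"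
proof (cases xs)
  case Nil then show ?thesis by auto
next
  case (Cons a ys) then obtain t' x where a: "a = (t',x)" by (cases a)
  show ?thesis
  proof (cases "t = t'")
    case True
    show ?thesis
    proof (cases "y \<circ> x = id")
      case True
      then have "y \<circ> (x \<circ> evalN ys) = evalN ys" by (metis comp_assoc id_comp)
      then show ?thesis using True \<open>t = t'\<close> Cons a by auto
    qed (use Cons a True in \<open>auto simp: comp_assoc\<close>)
  qed (use Cons a in auto)
qed

lemma lmul_alt:
  assumes "pgrp H" "pgrp A" "y \<in> (if t then H else A)" "alt H A xs"
  shows "alt H A (lmul (t,y) xs)"
proof (cases xs)
  case Nil then show ?thesis using assms by (auto simp: good_def)
next
  case (Cons a ys) then obtain t' x where a: "a = (t',x)" by (cases a)
  have ys: "alt H A ys" and gx: "good H A t' x" and hd: "ys \<noteq> [] \<longrightarrow> t' \<noteq> fst (hd ys)"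
    using assms(4) Cons a alt_Cons[of H A a ys] by auto
  show ?thesis
  proof (cases "t = t'")
    case True
    have "y \<circ> x \<in> (if t then H else A)" using assms gx True by (auto simp: good_def pgrp_def)
    then show ?thesis using Cons a True ys hd by (auto simp: alt_Cons good_def)
  next
    case False
    then show ?thesis using Cons a assms(3,4) by (auto simp: alt_Cons good_def)
  qed
qed

lemma alt_bij: "pgrp H \<Longrightarrow> pgrp A \<Longrightarrow> alt H A xs \<Longrightarrow> bij (evalN xs)"
proof (induction xs)
  case (Cons a xs)
  then have "bij (snd a)" by (auto simp: alt_Cons good_def pgrp_def split: if_splits)
  moreover have "bij (evalN xs)" using Cons by (auto simp: alt_Cons)
  ultimately show ?case using bij_comp by (metis evalN.simps(2))
qed simp

definition gen2 :: "(nat \<Rightarrow> nat) set \<Rightarrow> (nat \<Rightarrow> nat) set \<Rightarrow> (nat \<Rightarrow> nat) set" where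
  "gen2 H A = evalN ` {xs. alt H A xs}"

lemma gen2_lmul: "pgrp H \<Longrightarrow> pgrp A \<Longrightarrow> y \<in> (if t then H else A) \<Longrightarrow> f \<in> gen2 H A \<Longrightarrow> y \<circ> f \<in> gen2 H A"
proof -
  assume a: "pgrp H" "pgrp A" "y \<in> (if t then H else A)" "f \<in> gen2 H A"
  then obtain xs where xs: "alt H A xs" "f = evalN xs" by (auto simp: gen2_def)
  then have "alt H A (lmul (t,y) xs)" using lmul_alt a by blast
  moreover have "y \<circ> f = evalN (lmul (t,y) xs)" using lmul_eval xs by simp
  ultimately show ?thesis unfolding gen2_def by blast
qed

lemma gen2_comp:
  assumes "pgrp H" "pgrp A" "alt H A xs" "f \<in> gen2 H A"
  shows "evalN xs \<circ> f \<in> gen2 H A"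
  using assms(3)
proof (induction xs)
  case Nil then show ?case using assms by simp
next
  case (Cons a xs)
  then have "alt H A xs" "snd a \<in> (if fst a then H else A)" by (auto simp: alt_Cons good_def)
  then have "snd a \<circ> (evalN xs \<circ> f) \<in> gen2 H A" using Cons gen2_lmul assms by blast
  then show ?case by (metis evalN.simps(2) comp_assoc)
qed

lemma gen2_pgrp: assumes "pgrp H" "pgrp A" shows "pgrp (gen2 H A)"
  unfolding pgrp_def
proof (intro conjI ballI)
  fix f assume "f \<in> gen2 H A" then show "bij f" using alt_bij assms by (auto simp: gen2_def)
next
  show "id \<in> gen2 H A" unfolding gen2_def by (rule image_eqI[of _ _ "[]"]) auto
next
  fix f g assume "f \<in> gen2 H A" "g \<in> gen2 H A" then show "f \<circ> g \<in> gen2 H A"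
    using gen2_comp assms by (auto simp: gen2_def)
next
  fix f assume "f \<in> gen2 H A"
  have idg: "id \<in> gen2 H A" unfolding gen2_def by (rule image_eqI[of _ _ "[]"]) auto
  obtain xs where xs: "alt H A xs" "f = evalN xs" using \<open>f \<in> gen2 H A\<close> by (auto simp: gen2_def)
  have "iv (evalN xs) \<in> gen2 H A" using xs(1)
  proof (induction xs)
    case Nil then show ?case unfolding gen2_def by (intro image_eqI[of _ _ "[]"]) auto
  next
    case (Cons a xs)
    then have al: "alt H A xs" and ga: "snd a \<in> (if fst a then H else A)" by (auto simp: alt_Cons good_def)
    have bx: "bij (snd a)" using ga assms by (auto simp: pgrp_def split: if_splits)
    have be: "bij (evalN xs)" using alt_bij assms al by blast
    have "iv (snd a) \<in> (if fst a then H else A)" using ga assms by (auto simp: pgrp_def split: if_splits)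
    then have "iv (snd a) \<circ> id \<in> gen2 H A" using gen2_lmul[OF assms] idg by blast
    then have "iv (snd a) \<in> gen2 H A" by simp
    moreover have "iv (evalN xs) \<in> gen2 H A" using Cons al by blast
    ultimately have "iv (evalN xs) \<circ> iv (snd a) \<in> gen2 H A"
      using gen2_comp[OF assms] by (auto simp: gen2_def)
    then show ?case using o_inv_distrib[OF bx be] by (metis evalN.simps(2))
  qed
  then show "iv f \<in> gen2 H A" using xs by simp
qed

lemma gen2_sub1: "pgrp H \<Longrightarrow> H \<subseteq> gen2 H A"
proof
  fix h assume "pgrp H" "h \<in> H"
  show "h \<in> gen2 H A"
  proof (cases "h = id")
    case True then show ?thesis unfolding gen2_def by (intro image_eqI[of _ _ "[]"]) auto
  next
    case False then show ?thesis unfolding gen2_def using \<open>h \<in> H\<close>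
      by (intro image_eqI[of _ _ "[(True,h)]"]) (auto simp: good_def)
  qed
qed

lemma gen2_sub2: "pgrp A \<Longrightarrow> A \<subseteq> gen2 H A"
proof
  fix h assume "pgrp A" "h \<in> A"
  show "h \<in> gen2 H A"
  proof (cases "h = id")
    case True then show ?thesis unfolding gen2_def by (intro image_eqI[of _ _ "[]"]) auto
  next
    case False then show ?thesis unfolding gen2_def using \<open>h \<in> A\<close>
      by (intro image_eqI[of _ _ "[(False,h)]"]) (auto simp: good_def)
  qed
qed

lemma countable_gen2: "countable H \<Longrightarrow> countable A \<Longrightarrow> countable (gen2 H A)"
proof -
  assume c: "countable H" "countable A"
  have "{xs. alt H A xs} \<subseteq> lists (UNIV \<times> (H \<union> A))"
  proof
    fix xs assume "xs \<in> {xs. alt H A xs}"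
    then show "xs \<in> lists (UNIV \<times> (H \<union> A))"
      by (induction xs) (auto simp: alt_Cons good_def split: if_splits)
  qed
  moreover have "countable (lists ((UNIV::bool set) \<times> (H \<union> A)))" using c by (intro countable_lists countable_SIGMA) (auto intro: countable_finite)
  ultimately show ?thesis unfolding gen2_def by (auto intro: countable_subset)
qed

lemma rot_fix: "inj v \<Longrightarrow> finite (Fix (v \<circ> u)) \<Longrightarrow> finite (Fix (u \<circ> v))"
proof -
  assume v: "inj v" and f: "finite (Fix (v \<circ> u))"
  have "v ` Fix (u \<circ> v) \<subseteq> Fix (v \<circ> u)" by (auto simp: Fix_def)
  then have "finite (v ` Fix (u \<circ> v))" using f finite_subset by blast
  then show ?thesis using v by (meson finite_imageD inj_on_subset subset_UNIV)
qed

locale twogrp =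
  fixes H A :: "(nat \<Rightarrow> nat) set"
  assumes pH: "pgrp H" and pA: "pgrp A"
    and cH: "\<And>h. h \<in> H \<Longrightarrow> h \<noteq> id \<Longrightarrow> finite (Fix h)"
    and cA: "\<And>h. h \<in> A \<Longrightarrow> h \<noteq> id \<Longrightarrow> finite (Fix h)"
    and key: "\<And>xs. alt H A xs \<Longrightarrow> xs \<noteq> [] \<Longrightarrow> fst (hd xs) \<Longrightarrow> \<not> fst (last xs) \<Longrightarrow> finite (Fix (evalN xs))"
begin

lemma diff_tags:
  assumes "alt H A xs" "xs \<noteq> []" "fst (hd xs) \<noteq> fst (last xs)"
  shows "finite (Fix (evalN xs))"
proof (cases "fst (hd xs)")
  case True then show ?thesis using assms key by auto
next
  case False
  obtain a ys where xs: "xs = a # ys" using assms(2) by (cases xs) auto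
  have ys: "ys \<noteq> []" using xs assms(3) by auto
  have fa: "\<not> fst a" "fst (last ys)" using False xs ys assms(3) by auto
  have al: "alt H A ys" "good H A (fst a) (snd a)" using assms(1) xs alt_Cons by auto
  have hy: "fst (hd ys)" using assms(1) xs alt_Cons fa ys by auto
  have "alt H A [a]" using al by (cases a) auto
  then have "alt H A (ys @ [a])" using al fa alt_append[of H A ys "[a]"] by auto
  moreover have "fst (hd (ys @ [a]))" "\<not> fst (last (ys @ [a]))" using hy ys fa by auto
  ultimately have f: "finite (Fix (evalN (ys @ [a])))" using key by blast
  have "evalN (ys @ [a]) = evalN ys \<circ> snd a" by (simp add: evalN_append)
  moreover have "inj (evalN ys)" using alt_bij[OF pH pA al(1)] bij_is_inj by blast
  ultimately have "finite (Fix (snd a \<circ> evalN ys))" using rot_fix f by metis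
  then show ?thesis using xs by simp
qed

lemma alt_cof: "alt H A xs \<Longrightarrow> evalN xs = id \<or> finite (Fix (evalN xs))"
proof (induction "length xs" arbitrary: xs rule: less_induct)
  case less
  show ?case
  proof (cases xs)
    case Nil then show ?thesis by simp
  next
    case (Cons a ys)
    show ?thesis
    proof (cases ys)
      case Nil
      then have "good H A (fst a) (snd a)" using less.prems Cons alt_Cons by auto
      then show ?thesis using Cons Nil cH cA by (auto simp: good_def split: if_splits)
    next
      case (Cons b zs)
      show ?thesis
      proof (cases "fst (hd xs) = fst (last xs)")
        case False
        then show ?thesis using diff_tags less.prems \<open>xs = a # ys\<close> by blast
      next
        case True
        have ysne: "ys \<noteq> []" using Cons by simp
        define c where "c = last ys"
        define mid where "mid = butlast ys"
        have ys: "ys = mid @ [c]" using ysne by (simp add: c_def mid_def)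
        have xs: "xs = a # mid @ [c]" using ys \<open>xs = a # ys\<close> by simp
        have tc: "fst a = fst c" using True xs by simp
        have alys: "alt H A ys" and ga: "good H A (fst a) (snd a)" and hdys: "fst a \<noteq> fst (hd ys)"
          using less.prems \<open>xs = a # ys\<close> alt_Cons ysne by auto
        have midne: "mid \<noteq> []" using hdys tc ys by auto
        have almid: "alt H A mid" and gc: "good H A (fst c) (snd c)" and lm: "fst (last mid) \<noteq> fst c"
          using alys ys alt_append[of H A mid "[c]"] midne by (auto simp: alt_Cons)
        have hm: "fst (hd mid) \<noteq> fst a" using hdys ys midne by auto
        have ev: "evalN xs = snd a \<circ> (evalN mid \<circ> snd c)" using xs by (simp add: evalN_append)
        have bm: "bij (evalN mid)" using alt_bij[OF pH pA almid] .
        have bc: "bij (snd c)" and ba: "bij (snd a)" using gc ga pH pA by (auto simp: good_def pgrp_def split: if_splits)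
        have inj: "inj (evalN mid \<circ> snd c)" using bm bc by (simp add: bij_is_inj inj_compose)
        show ?thesis
        proof (cases "snd c \<circ> snd a = id")
          case True
          have "length mid < length xs" using xs by simp
          then have "evalN mid = id \<or> finite (Fix (evalN mid))" using less.hyps almid by blast
          then show ?thesis
          proof
            assume "evalN mid = id"
            then have "evalN xs = snd a \<circ> snd c" using ev by simp
            moreover have "snd a \<circ> snd c = id" using True ba bc
              by (metis bij_betw_imp_inj_on comp_assoc comp_id id_comp inj_iff)
            ultimately show ?thesis by simp
          next
            assume f: "finite (Fix (evalN mid))"
            have "(evalN mid \<circ> snd c) \<circ> snd a = evalN mid" using True by (simp add: comp_assoc)
            then show ?thesis using rot_fix[OF inj, of "snd a"] f ev by simp
          qed
        next
          case False
          have "snd c \<circ> snd a \<in> (if fst a then H else A)" using gc ga tc pH pA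
            by (auto simp: good_def pgrp_def split: if_splits)
          then have "alt H A [(fst a, snd c \<circ> snd a)]" using False by (simp add: good_def)
          then have al2: "alt H A (mid @ [(fst a, snd c \<circ> snd a)])"
            using almid alt_append midne lm tc by auto
          have "fst (hd (mid @ [(fst a, snd c \<circ> snd a)])) \<noteq> fst (last (mid @ [(fst a, snd c \<circ> snd a)]))"
            using hm midne by simp
          then have "finite (Fix (evalN (mid @ [(fst a, snd c \<circ> snd a)])))" using diff_tags al2 by simp
          then have "finite (Fix ((evalN mid \<circ> snd c) \<circ> snd a))" by (simp add: evalN_append comp_assoc)
          then show ?thesis using rot_fix[OF inj, of "snd a"] ev by simp
        qed
      qed
    qed
  qed
qed

lemma gen2_cof: "f \<in> gen2 H A \<Longrightarrow> f = id \<or> finite (Fix f)"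
  using alt_cof by (auto simp: gen2_def)

end

fun chain :: "(nat \<times> nat) set \<Rightarrow> ((nat \<Rightarrow> nat) \<times> (nat \<Rightarrow> nat)) list \<Rightarrow> nat \<Rightarrow> nat \<Rightarrow> bool" where
  "chain P [] x y = (x = y)"
| "chain P ((g,l)#ws) x y = (\<exists>c e. (c,x) \<in> P \<and> (l c, e) \<in> P \<and> chain P ws (g e) y)"

lemma chain_mono: "chain P ws x y \<Longrightarrow> P \<subseteq> Q \<Longrightarrow> chain Q ws x y"
  by (induction P ws x y rule: chain.induct) auto

lemma chain_ran: "chain P ws x y \<Longrightarrow> ws \<noteq> [] \<Longrightarrow> x \<in> snd ` P"
  by (cases ws) (auto simp: image_iff, force)

lemma chain_last: "chain P ws x y \<Longrightarrow> ws \<noteq> [] \<Longrightarrow> \<exists>g e. g \<in> fst ` set ws \<and> e \<in> snd ` P \<and> y = g e"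
proof (induction P ws x y rule: chain.induct)
  case (2 P g l ws x y)
  then obtain c e where ce: "(c,x) \<in> P" "(l c, e) \<in> P" "chain P ws (g e) y" by auto
  show ?case
  proof (cases "ws = []")
    case True then show ?thesis using ce by force
  next
    case False then show ?thesis using 2 ce by fastforce
  qed
qed simp

definition baddom :: "(nat \<Rightarrow> nat) set \<Rightarrow> (nat \<times> nat) set \<Rightarrow> nat set" where
  "baddom S Q = snd ` Q \<union> (\<Union>g\<in>S. Fix g \<union> g -` (snd ` Q) \<union> g ` (snd ` Q))"

definition badran :: "(nat \<Rightarrow> nat) set \<Rightarrow> (nat \<times> nat) set \<Rightarrow> nat set" where
  "badran T Q = fst ` Q \<union> (\<Union>l\<in>T. Fix l \<union> l -` (fst ` Q) \<union> l ` (fst ` Q))"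

lemma dom_ext:
  assumes b: "b \<notin> baddom S Q" and ws: "fst ` set ws \<subseteq> S"
  shows "chain (insert (a,b) Q) ws x y \<Longrightarrow> x \<noteq> b \<Longrightarrow> y \<in> snd ` Q \<Longrightarrow> chain Q ws x y"
  using ws
proof (induction "insert (a,b) Q" ws x y rule: chain.induct)
  case (1 x y) then show ?case by simp
next
  case (2 g l ws x y)
  then obtain c e where ce: "(c,x) \<in> insert (a,b) Q" "(l c, e) \<in> insert (a,b) Q"
      "chain (insert (a,b) Q) ws (g e) y" by auto
  have gS: "g \<in> S" using 2 by auto
  have cx: "(c,x) \<in> Q" using ce(1) 2 by auto
  have eb: "e \<noteq> b"
  proof
    assume e: "e = b"
    show False
    proof (cases "ws = []")
      case True
      then have "g b = y" using ce e by simp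
      then show False using b gS 2 by (auto simp: baddom_def)
    next
      case False
      then have "g b \<in> snd ` insert (a,b) Q" using chain_ran ce e by blast
      then show False using b gS by (auto simp: baddom_def Fix_def)
    qed
  qed
  then have lce: "(l c, e) \<in> Q" using ce(2) by auto
  then have "e \<in> snd ` Q" by force
  then have "g e \<in> g ` snd ` Q" by blast
  then have "g e \<noteq> b" using b gS unfolding baddom_def by blast
  then have "chain Q ws (g e) y" using 2 ce by auto
  then show ?case using cx lce by auto
qed

lemma dom_ext_cycle:
  assumes b: "b \<notin> baddom S Q" and ws: "fst ` set ws \<subseteq> S"
    and ch: "chain (insert (a,b) Q) ws x x"
  shows "chain Q ws x x"
proof (cases "ws = []")
  case True then show ?thesis by simp
next
  case False
  obtain g e where ge: "g \<in> fst ` set ws" "e \<in> snd ` insert (a,b) Q" "x = g e"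
    using chain_last[OF ch False] by blast
  have gS: "g \<in> S" using ge ws by auto
  have xb: "x \<noteq> b"
  proof
    assume xb: "x = b"
    show False
    proof (cases "e = b")
      case True then show False using ge gS b xb by (auto simp: baddom_def Fix_def)
    next
      case False
      then have "e \<in> snd ` Q" using ge by auto
      then have "g e \<in> g ` snd ` Q" by blast
      then show False using ge gS b xb unfolding baddom_def by blast
    qed
  qed
  have "x \<in> snd ` insert (a,b) Q" using chain_ran[OF ch False] .
  then have "x \<in> snd ` Q" using xb by auto
  then show ?thesis using dom_ext[OF b ws ch xb] by blast
qed

lemma ran_ext:
  assumes a: "a \<notin> badran T Q" and ws: "snd ` set ws \<subseteq> T"
  shows "chain (insert (a,b) Q) ws x y \<Longrightarrow> chain Q ws x y"
  using ws
proof (induction "insert (a,b) Q" ws x y rule: chain.induct)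
  case (1 x y) then show ?case by simp
next
  case (2 g l ws x y)
  then obtain c e where ce: "(c,x) \<in> insert (a,b) Q" "(l c, e) \<in> insert (a,b) Q"
      "chain (insert (a,b) Q) ws (g e) y" by auto
  have lT: "l \<in> T" using 2 by auto
  have ca: "c \<noteq> a"
  proof
    assume "c = a"
    then have "l a \<in> fst ` insert (a,b) Q" using ce(2) by force
    then show False using a lT by (auto simp: badran_def Fix_def)
  qed
  then have cx: "(c,x) \<in> Q" using ce(1) by auto
  then have "c \<in> fst ` Q" by force
  then have "l c \<in> l ` fst ` Q" by blast
  then have "l c \<noteq> a" using a lT unfolding badran_def by blast
  then have lce: "(l c, e) \<in> Q" using ce(2) by auto
  have "chain Q ws (g e) y" using 2 ce by auto
  then show ?case using cx lce by auto
qed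

definition SH :: "(nat \<Rightarrow> nat) set \<Rightarrow> nat \<Rightarrow> (nat \<Rightarrow> nat) set" where
  "SH H s = {h \<in> H. h \<noteq> id \<and> to_nat_on H h < s}"

definition step :: "(nat \<Rightarrow> nat) set \<Rightarrow> (nat \<Rightarrow> nat) set \<Rightarrow> nat \<Rightarrow> (nat \<times> nat) set \<Rightarrow> (nat \<times> nat) set" where
  "step H L s Q = (if even s then (if s div 2 \<in> fst ` Q then Q else insert (s div 2, SOME b. b \<notin> baddom (SH H s) Q) Q)
                   else (if s div 2 \<in> snd ` Q then Q else insert (SOME a. a \<notin> badran (SH L s) Q, s div 2) Q))"

primrec stg :: "(nat \<Rightarrow> nat) set \<Rightarrow> (nat \<Rightarrow> nat) set \<Rightarrow> nat \<Rightarrow> (nat \<times> nat) set" where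
  "stg H L 0 = {}"
| "stg H L (Suc s) = step H L s (stg H L s)"

definition pinj :: "(nat \<times> nat) set \<Rightarrow> bool" where
  "pinj Q \<longleftrightarrow> (\<forall>x y z. (x,y) \<in> Q \<longrightarrow> (x,z) \<in> Q \<longrightarrow> y = z) \<and> (\<forall>x y z. (x,z) \<in> Q \<longrightarrow> (y,z) \<in> Q \<longrightarrow> x = y)"

lemma SH_mono: "s \<le> t \<Longrightarrow> SH H s \<subseteq> SH H t"
  by (auto simp: SH_def)

lemma finite_SH: "countable H \<Longrightarrow> finite (SH H s)"
proof -
  assume c: "countable H"
  have "SH H s \<subseteq> from_nat_into H ` {..<s}"
  proof
    fix h assume "h \<in> SH H s"
    then show "h \<in> from_nat_into H ` {..<s}" using c
      by (auto simp: SH_def intro!: image_eqI[of _ _ "to_nat_on H h"])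
  qed
  then show ?thesis by (rule finite_subset) auto
qed

locale gen =
  fixes H L :: "(nat \<Rightarrow> nat) set"
  assumes pH: "pgrp H" and pL: "pgrp L"
    and cH: "\<And>h. h \<in> H \<Longrightarrow> h \<noteq> id \<Longrightarrow> finite (Fix h)"
    and cL: "\<And>h. h \<in> L \<Longrightarrow> h \<noteq> id \<Longrightarrow> finite (Fix h)"
    and ctH: "countable H" and ctL: "countable L"
begin

lemma finite_bad_aux:
  assumes "pgrp X" "\<And>h. h \<in> X \<Longrightarrow> h \<noteq> id \<Longrightarrow> finite (Fix h)" "countable X" "finite B"
  shows "finite (\<Union>g\<in>SH X s. Fix g \<union> g -` B \<union> g ` B)"
proof (rule finite_UN_I)
  show "finite (SH X s)" using finite_SH assms by blast
next
  fix g assume g: "g \<in> SH X s"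
  then have "bij g" "finite (Fix g)" using assms by (auto simp: SH_def pgrp_def)
  then show "finite (Fix g \<union> g -` B \<union> g ` B)" using assms(4)
    by (auto intro: finite_vimageI simp: bij_is_inj)
qed

lemma finite_baddom: "finite Q \<Longrightarrow> finite (baddom (SH H s) Q)"
  unfolding baddom_def using finite_bad_aux[OF pH cH ctH] by blast

lemma finite_badran: "finite Q \<Longrightarrow> finite (badran (SH L s) Q)"
  unfolding badran_def using finite_bad_aux[OF pL cL ctL] by blast

lemma some_dom: "finite Q \<Longrightarrow> (SOME b. b \<notin> baddom (SH H s) Q) \<notin> baddom (SH H s) Q"
proof -
  assume "finite Q"
  then have "finite (baddom (SH H s) Q)" by (rule finite_baddom)
  then have "\<exists>b. b \<notin> baddom (SH H s) Q" using ex_new_if_finite[OF infinite_UNIV_nat] by blast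
  then show ?thesis by (rule someI_ex)
qed

lemma some_ran: "finite Q \<Longrightarrow> (SOME a. a \<notin> badran (SH L s) Q) \<notin> badran (SH L s) Q"
proof -
  assume "finite Q"
  then have "finite (badran (SH L s) Q)" by (rule finite_badran)
  then have "\<exists>b. b \<notin> badran (SH L s) Q" using ex_new_if_finite[OF infinite_UNIV_nat] by blast
  then show ?thesis by (rule someI_ex)
qed

lemma step_e1: "even s \<Longrightarrow> s div 2 \<in> fst ` Q \<Longrightarrow> step H L s Q = Q"
  unfolding step_def by simp
lemma step_e2: "even s \<Longrightarrow> s div 2 \<notin> fst ` Q \<Longrightarrow> step H L s Q = insert (s div 2, SOME b. b \<notin> baddom (SH H s) Q) Q"
  unfolding step_def by simp
lemma step_o1: "odd s \<Longrightarrow> s div 2 \<in> snd ` Q \<Longrightarrow> step H L s Q = Q"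
  unfolding step_def by simp
lemma step_o2: "odd s \<Longrightarrow> s div 2 \<notin> snd ` Q \<Longrightarrow> step H L s Q = insert (SOME a. a \<notin> badran (SH L s) Q, s div 2) Q"
  unfolding step_def by simp

lemma pinj_insert: "pinj Q \<Longrightarrow> a \<notin> fst ` Q \<Longrightarrow> b \<notin> snd ` Q \<Longrightarrow> pinj (insert (a,b) Q)"
  unfolding pinj_def by (auto simp: image_iff)

lemma stg_inv: "finite (stg H L s) \<and> pinj (stg H L s)"
proof (induction s)
  case 0 then show ?case by (simp add: pinj_def)
next
  case (Suc s)
  let ?Q = "stg H L s"
  have fQ: "finite ?Q" and pQ: "pinj ?Q" using Suc by auto
  show ?case
  proof (cases "even s")
    case True
    let ?b = "SOME b. b \<notin> baddom (SH H s) ?Q"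
    have b: "?b \<notin> snd ` ?Q" using some_dom[OF fQ] by (auto simp: baddom_def)
    show ?thesis
    proof (cases "s div 2 \<in> fst ` ?Q")
      case True then show ?thesis using Suc step_e1[OF \<open>even s\<close> True] by simp
    next
      case False
      then have "pinj (insert (s div 2, ?b) ?Q)" using pQ b pinj_insert by blast
      then show ?thesis using fQ step_e2[OF \<open>even s\<close> False] by simp
    qed
  next
    case False
    let ?a = "SOME a. a \<notin> badran (SH L s) ?Q"
    have a: "?a \<notin> fst ` ?Q" using some_ran[OF fQ] by (auto simp: badran_def)
    show ?thesis
    proof (cases "s div 2 \<in> snd ` ?Q")
      case True then show ?thesis using Suc step_o1[OF \<open>odd s\<close> True] by simp
    next
      case False
      then have "pinj (insert (?a, s div 2) ?Q)" using pQ a pinj_insert by blast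
      then show ?thesis using fQ step_o2[OF \<open>odd s\<close> False] by simp
    qed
  qed
qed

lemma stg_Suc_sub: "stg H L s \<subseteq> stg H L (Suc s)"
  by (auto simp: step_def)

lemma stg_mono: "s \<le> t \<Longrightarrow> stg H L s \<subseteq> stg H L t"
  by (induction t rule: dec_induct) (use stg_Suc_sub in blast)+

lemma stg_cover_dom: "n \<in> fst ` stg H L (Suc (2*n))"
  by (auto simp: step_def)

lemma stg_cover_ran: "n \<in> snd ` stg H L (Suc (Suc (2*n)))"
proof -
  have "odd (Suc (2*n))" "Suc (2*n) div 2 = n" by auto
  then show ?thesis by (simp add: step_def del: stg.simps) (auto simp: step_def)
qed

lemma stg_key:
  assumes ws: "set ws \<subseteq> SH H s \<times> SH L s" and ch: "chain (stg H L (Suc s)) ws x x"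
  shows "chain (stg H L s) ws x x"
proof -
  let ?Q = "stg H L s"
  have fQ: "finite ?Q" using stg_inv by blast
  show ?thesis
  proof (cases "even s")
    case True
    let ?b = "SOME b. b \<notin> baddom (SH H s) ?Q"
    show ?thesis
    proof (cases "s div 2 \<in> fst ` ?Q")
      case True then show ?thesis using ch step_e1[OF \<open>even s\<close> True] by simp
    next
      case False
      have "chain (insert (s div 2, ?b) ?Q) ws x x" using ch step_e2[OF \<open>even s\<close> False] by simp
      moreover have "fst ` set ws \<subseteq> SH H s" using ws by auto
      ultimately show ?thesis using dom_ext_cycle[OF some_dom[OF fQ]] by blast
    qed
  next
    case False
    let ?a = "SOME a. a \<notin> badran (SH L s) ?Q"
    show ?thesis
    proof (cases "s div 2 \<in> snd ` ?Q")
      case True then show ?thesis using ch step_o1[OF \<open>odd s\<close> True] by simp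
    next
      case False
      have "chain (insert (?a, s div 2) ?Q) ws x x" using ch step_o2[OF \<open>odd s\<close> False] by simp
      moreover have "snd ` set ws \<subseteq> SH L s" using ws by auto
      ultimately show ?thesis using ran_ext[OF some_ran[OF fQ]] by blast
    qed
  qed
qed

lemma stg_key_down:
  assumes ws: "set ws \<subseteq> SH H j \<times> SH L j" and "j \<le> t" and ch: "chain (stg H L t) ws x x"
  shows "chain (stg H L j) ws x x"
  using assms(2) ch
proof (induction t rule: dec_induct)
  case base then show ?case .
next
  case (step t)
  have "set ws \<subseteq> SH H t \<times> SH L t" using ws SH_mono[OF step.hyps(1)] by blast
  then show ?case using step stg_key by blast
qed

end

fun evalp :: "(nat \<Rightarrow> nat) \<Rightarrow> ((nat \<Rightarrow> nat) \<times> (nat \<Rightarrow> nat)) list \<Rightarrow> nat \<Rightarrow> nat" where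
  "evalp p [] = id"
| "evalp p ((g,l)#ws) = evalp p ws \<circ> (g \<circ> p \<circ> l \<circ> iv p)"

lemma evalp_snoc: "evalp p (ws @ [(g,l)]) = (g \<circ> p \<circ> l \<circ> iv p) \<circ> evalp p ws"
proof (induction ws)
  case Nil then show ?case by simp
next
  case (Cons w ws)
  obtain a b where w: "w = (a,b)" by (cases w)
  have "evalp p ((w#ws) @ [(g,l)]) = evalp p (ws @ [(g,l)]) \<circ> (a \<circ> p \<circ> b \<circ> iv p)" using w by simp
  also have "\<dots> = (g \<circ> p \<circ> l \<circ> iv p) \<circ> (evalp p ws \<circ> (a \<circ> p \<circ> b \<circ> iv p))" using Cons by (metis comp_assoc)
  also have "\<dots> = (g \<circ> p \<circ> l \<circ> iv p) \<circ> evalp p (w#ws)" using w by simp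
  finally show ?case .
qed

lemma chain_evalp: "bij p \<Longrightarrow> chain {(c, p c) | c. True} ws x y \<longleftrightarrow> evalp p ws x = y"
proof (induction ws arbitrary: x)
  case Nil then show ?case by simp
next
  case (Cons w ws)
  obtain g l where w: "w = (g,l)" by (cases w)
  have "chain {(c, p c) | c. True} (w#ws) x y \<longleftrightarrow> chain {(c, p c) | c. True} ws (g (p (l (iv p x)))) y"
  proof
    assume "chain {(c, p c) | c. True} (w#ws) x y"
    then obtain c e where "p c = x" "e = p (l c)" "chain {(c, p c) | c. True} ws (g e) y" using w by auto
    moreover have "iv p x = c" using \<open>p c = x\<close> Cons.prems by (metis bij_inv_eq_iff)
    ultimately show "chain {(c, p c) | c. True} ws (g (p (l (iv p x)))) y" by simp
  next
    assume "chain {(c, p c) | c. True} ws (g (p (l (iv p x)))) y"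
    moreover have "p (iv p x) = x" using Cons.prems by (meson bij_inv_eq_iff)
    ultimately show "chain {(c, p c) | c. True} (w#ws) x y" using w by force
  qed
  also have "\<dots> \<longleftrightarrow> evalp p ws (g (p (l (iv p x)))) = y" using Cons by blast
  also have "\<dots> \<longleftrightarrow> evalp p (w#ws) x = y" using w by simp
  finally show ?case .
qed

context gen
begin

definition Pg :: "(nat \<times> nat) set" where "Pg = (\<Union>s. stg H L s)"

lemma Pg_pinj: "pinj Pg"
  unfolding pinj_def
proof (intro conjI allI impI)
  fix x y z assume a: "(x,y) \<in> Pg" "(x,z) \<in> Pg"
  then obtain s t where "(x,y) \<in> stg H L s" "(x,z) \<in> stg H L t" by (auto simp: Pg_def)
  then have "(x,y) \<in> stg H L (max s t)" "(x,z) \<in> stg H L (max s t)"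
    using stg_mono[of s "max s t"] stg_mono[of t "max s t"] by auto
  then show "y = z" using stg_inv[of "max s t"] by (auto simp: pinj_def)
next
  fix x y z assume a: "(x,z) \<in> Pg" "(y,z) \<in> Pg"
  then obtain s t where "(x,z) \<in> stg H L s" "(y,z) \<in> stg H L t" by (auto simp: Pg_def)
  then have "(x,z) \<in> stg H L (max s t)" "(y,z) \<in> stg H L (max s t)"
    using stg_mono[of s "max s t"] stg_mono[of t "max s t"] by auto
  then show "x = y" using stg_inv[of "max s t"] by (auto simp: pinj_def)
qed

lemma Pg_dom: "\<exists>y. (x,y) \<in> Pg"
proof -
  obtain y where "(x,y) \<in> stg H L (Suc (2*x))" using stg_cover_dom[of x] by force
  then show ?thesis unfolding Pg_def by blast
qed

lemma Pg_ran: "\<exists>x. (x,y) \<in> Pg"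
proof -
  obtain x where "(x,y) \<in> stg H L (Suc (Suc (2*y)))" using stg_cover_ran[of y] by force
  then show ?thesis unfolding Pg_def by blast
qed

definition pm :: "nat \<Rightarrow> nat" where "pm x = (THE y. (x,y) \<in> Pg)"

lemma pm_in: "(x, pm x) \<in> Pg"
proof -
  obtain y where y: "(x,y) \<in> Pg" using Pg_dom by blast
  have "pm x = y" unfolding pm_def
    by (rule the_equality[where P = "\<lambda>y. (x,y) \<in> Pg", OF y]) (use Pg_pinj y in \<open>auto simp: pinj_def\<close>)
  then show ?thesis using y by simp
qed

lemma Pg_eq: "Pg = {(c, pm c) | c. True}"
proof -
  have "(x,y) \<in> Pg \<longleftrightarrow> y = pm x" for x y
    using pm_in[of x] Pg_pinj by (auto simp: pinj_def)
  then show ?thesis by auto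
qed

lemma bij_pm: "bij pm"
proof (rule bijI)
  show "inj pm" unfolding inj_def
  proof (intro allI impI)
    fix x y assume "pm x = pm y"
    then have "(x, pm x) \<in> Pg" "(y, pm x) \<in> Pg" using pm_in[of x] pm_in[of y] by auto
    then show "x = y" using Pg_pinj unfolding pinj_def by blast
  qed
  show "surj pm"
  proof -
    have "y \<in> range pm" for y
    proof -
      obtain x where "(x,y) \<in> Pg" using Pg_ran by blast
      then show ?thesis using Pg_eq by auto
    qed
    then show ?thesis by auto
  qed
qed

lemma chain_fin: "chain Pg ws x y \<Longrightarrow> \<exists>s. chain (stg H L s) ws x y"
proof (induction Pg ws x y rule: chain.induct)
  case (1 x y) then show ?case by simp
next
  case (2 g l ws x y)
  then obtain c e where ce: "(c,x) \<in> Pg" "(l c, e) \<in> Pg" "chain Pg ws (g e) y" by auto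
  then obtain s0 where s0: "chain (stg H L s0) ws (g e) y" using 2 by blast
  obtain s1 s2 where s12: "(c,x) \<in> stg H L s1" "(l c, e) \<in> stg H L s2" using ce by (auto simp: Pg_def)
  let ?m = "max s0 (max s1 s2)"
  have m1: "s1 \<le> ?m" "s2 \<le> ?m" "s0 \<le> ?m" by simp_all
  have "(c,x) \<in> stg H L ?m" using subsetD[OF stg_mono[OF m1(1)] s12(1)] .
  moreover have "(l c, e) \<in> stg H L ?m" using subsetD[OF stg_mono[OF m1(2)] s12(2)] .
  moreover have "chain (stg H L ?m) ws (g e) y" using chain_mono[OF s0 stg_mono[OF m1(3)]] .
  ultimately show ?case by auto
qed

lemma fix_chain_finite:
  assumes ne: "ws \<noteq> []" and ws: "set ws \<subseteq> (H - {id}) \<times> (L - {id})"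
  shows "finite {x. chain Pg ws x x}"
proof -
  have "finite (to_nat_on H ` fst ` set ws \<union> to_nat_on L ` snd ` set ws)" by auto
  then obtain j where j: "\<forall>n \<in> to_nat_on H ` fst ` set ws \<union> to_nat_on L ` snd ` set ws. n < j"
    using finite_nat_set_iff_bounded by blast
  have wsj: "set ws \<subseteq> SH H j \<times> SH L j"
  proof
    fix w assume w: "w \<in> set ws"
    obtain g l where gl: "w = (g,l)" by (cases w)
    have "g \<in> H" "g \<noteq> id" "l \<in> L" "l \<noteq> id" using w ws gl by auto
    moreover have "to_nat_on H g < j" "to_nat_on L l < j" using j w gl by force+
    ultimately show "w \<in> SH H j \<times> SH L j" using gl by (simp add: SH_def)
  qed
  have "{x. chain Pg ws x x} \<subseteq> snd ` stg H L j"
  proof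
    fix x assume "x \<in> {x. chain Pg ws x x}"
    then obtain s where s: "chain (stg H L s) ws x x" using chain_fin by blast
    have "chain (stg H L j) ws x x"
    proof (cases "s \<le> j")
      case True then show ?thesis using s chain_mono stg_mono by blast
    next
      case False then show ?thesis using stg_key_down[OF wsj _ s] by simp
    qed
    then show "x \<in> snd ` stg H L j" using chain_ran ne by blast
  qed
  moreover have "finite (stg H L j)" using stg_inv by blast
  ultimately show ?thesis using finite_subset by blast
qed

definition AA :: "(nat \<Rightarrow> nat) set" where "AA = (\<lambda>l. pm \<circ> l \<circ> iv pm) ` L"

lemma fix_evalp_finite:
  assumes ne: "ws \<noteq> []" and ws: "set ws \<subseteq> (H - {id}) \<times> (L - {id})"
  shows "finite (Fix (evalp pm ws))"
proof -
  have "Fix (evalp pm ws) = {x. chain Pg ws x x}"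
    unfolding Fix_def Pg_eq using chain_evalp[OF bij_pm] by blast
  then show ?thesis using fix_chain_finite[OF assms] by simp
qed

end

lemma iv_comp_self: "bij p \<Longrightarrow> iv p \<circ> p = id"
  by (meson bij_is_inj inv_o_cancel)
lemma comp_iv_self: "bij p \<Longrightarrow> p \<circ> iv p = id"
  by (meson bij_is_surj surj_iff)

lemma conj_comp: "bij p \<Longrightarrow> (p \<circ> f \<circ> iv p) \<circ> (p \<circ> g \<circ> iv p) = p \<circ> (f \<circ> g) \<circ> iv p"
proof -
  assume b: "bij p"
  have "(p \<circ> f \<circ> iv p) \<circ> (p \<circ> g \<circ> iv p) = p \<circ> f \<circ> (iv p \<circ> p) \<circ> g \<circ> iv p" by (simp add: comp_assoc)
  also have "\<dots> = p \<circ> (f \<circ> g) \<circ> iv p" using iv_comp_self[OF b] by (simp add: comp_assoc)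
  finally show ?thesis .
qed

lemma conj_inv: "bij p \<Longrightarrow> bij f \<Longrightarrow> iv (p \<circ> f \<circ> iv p) = p \<circ> iv f \<circ> iv p"
proof -
  assume b: "bij p" and bf: "bij f"
  have "(p \<circ> f \<circ> iv p) \<circ> (p \<circ> iv f \<circ> iv p) = id"
    using conj_comp[OF b, of f "iv f"] comp_iv_self[OF bf] comp_iv_self[OF b] by simp
  moreover have "(p \<circ> iv f \<circ> iv p) \<circ> (p \<circ> f \<circ> iv p) = id"
    using conj_comp[OF b, of "iv f" f] iv_comp_self[OF bf] comp_iv_self[OF b] by simp
  ultimately show ?thesis by (rule inv_unique_comp)
qed

lemma conj_fix: "bij p \<Longrightarrow> Fix (p \<circ> f \<circ> iv p) = p ` Fix f"
proof -
  assume b: "bij p"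
  have "x \<in> Fix (p \<circ> f \<circ> iv p) \<longleftrightarrow> x \<in> p ` Fix f" for x
  proof -
    have px: "p (iv p x) = x" using b by (meson bij_inv_eq_iff)
    have "x \<in> Fix (p \<circ> f \<circ> iv p) \<longleftrightarrow> p (f (iv p x)) = p (iv p x)" using px by (simp add: Fix_def)
    also have "\<dots> \<longleftrightarrow> f (iv p x) = iv p x" using b bij_is_inj by (metis injD)
    also have "\<dots> \<longleftrightarrow> x \<in> p ` Fix f"
    proof
      assume "f (iv p x) = iv p x"
      then have "iv p x \<in> Fix f" by (simp add: Fix_def)
      then show "x \<in> p ` Fix f" using px by (metis image_eqI)
    next
      assume "x \<in> p ` Fix f"
      then obtain y where y: "y \<in> Fix f" "x = p y" by blast
      then have "iv p x = y" using b by (simp add: bij_is_inj)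
      then show "f (iv p x) = iv p x" using y by (simp add: Fix_def)
    qed
    finally show ?thesis .
  qed
  then show ?thesis by blast
qed

context gen
begin

lemma pgrp_AA: "pgrp AA"
  unfolding pgrp_def AA_def
proof (intro conjI ballI)
  fix f assume "f \<in> (\<lambda>l. pm \<circ> l \<circ> iv pm) ` L"
  then obtain l where l: "l \<in> L" "f = pm \<circ> l \<circ> iv pm" by auto
  have "bij l" using l pL by (auto simp: pgrp_def)
  then show "bij f" using l bij_pm by (simp add: bij_comp bij_imp_bij_inv)
next
  have "pm \<circ> id \<circ> iv pm = id" using comp_iv_self[OF bij_pm] by simp
  moreover have "id \<in> L" using pL by (simp add: pgrp_def)
  ultimately show "id \<in> (\<lambda>l. pm \<circ> l \<circ> iv pm) ` L" by (metis image_eqI)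
next
  fix f g assume "f \<in> (\<lambda>l. pm \<circ> l \<circ> iv pm) ` L" "g \<in> (\<lambda>l. pm \<circ> l \<circ> iv pm) ` L"
  then obtain l k where "l \<in> L" "k \<in> L" "f = pm \<circ> l \<circ> iv pm" "g = pm \<circ> k \<circ> iv pm" by auto
  moreover have "l \<circ> k \<in> L" using pL calculation by (auto simp: pgrp_def)
  ultimately show "f \<circ> g \<in> (\<lambda>l. pm \<circ> l \<circ> iv pm) ` L" using conj_comp[OF bij_pm, of l k] by (metis image_eqI)
next
  fix f assume "f \<in> (\<lambda>l. pm \<circ> l \<circ> iv pm) ` L"
  then obtain l where l: "l \<in> L" "f = pm \<circ> l \<circ> iv pm" by auto
  have "bij l" "iv l \<in> L" using l pL by (auto simp: pgrp_def)
  then show "iv f \<in> (\<lambda>l. pm \<circ> l \<circ> iv pm) ` L" using l conj_inv[OF bij_pm, of l] by (metis image_eqI)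
qed

lemma AA_id: "l \<in> L \<Longrightarrow> pm \<circ> l \<circ> iv pm = id \<Longrightarrow> l = id"
proof -
  assume "pm \<circ> l \<circ> iv pm = id"
  then have "iv pm \<circ> (pm \<circ> l \<circ> iv pm) \<circ> pm = iv pm \<circ> pm" by simp
  then have "iv pm \<circ> pm \<circ> l \<circ> (iv pm \<circ> pm) = iv pm \<circ> pm" by (simp add: comp_assoc)
  then show "l = id" using iv_comp_self[OF bij_pm] by simp
qed

lemma cof_AA: "a \<in> AA \<Longrightarrow> a \<noteq> id \<Longrightarrow> finite (Fix a)"
proof -
  assume "a \<in> AA" "a \<noteq> id"
  then obtain l where l: "l \<in> L" "a = pm \<circ> l \<circ> iv pm" by (auto simp: AA_def)
  have "l \<noteq> id"
  proof
    assume "l = id" then have "a = pm \<circ> iv pm" using l by simp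
    then show False using \<open>a \<noteq> id\<close> comp_iv_self[OF bij_pm] by simp
  qed
  then have "finite (Fix l)" using cL l by blast
  then show ?thesis using l conj_fix[OF bij_pm] by simp
qed

lemma conv:
  "alt H AA xs \<Longrightarrow> xs \<noteq> [] \<Longrightarrow> fst (hd xs) \<Longrightarrow> \<not> fst (last xs) \<Longrightarrow>
   \<exists>ws. ws \<noteq> [] \<and> set ws \<subseteq> (H - {id}) \<times> (L - {id}) \<and> evalN xs = evalp pm ws"
proof (induction "length xs" arbitrary: xs rule: less_induct)
  case less
  obtain x1 ys where xs: "xs = x1 # ys" using less.prems(2) by (cases xs) auto
  have ysne: "ys \<noteq> []" using xs less.prems(3,4) by auto
  obtain x2 rest where ys: "ys = x2 # rest" using ysne by (cases ys) auto
  have g1: "good H AA (fst x1) (snd x1)" and t1: "fst x1" and a2: "alt H AA ys" and t12: "fst x1 \<noteq> fst x2"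
    using less.prems(1,3) xs ys alt_Cons by auto
  have g2: "good H AA (fst x2) (snd x2)" and arest: "alt H AA rest"
    and t2r: "rest \<noteq> [] \<longrightarrow> fst x2 \<noteq> fst (hd rest)" using a2 ys alt_Cons by auto
  have gH: "snd x1 \<in> H" "snd x1 \<noteq> id" using g1 t1 by (auto simp: good_def)
  have "snd x2 \<in> AA" "snd x2 \<noteq> id" using g2 t1 t12 by (auto simp: good_def)
  then obtain l where l: "l \<in> L" "snd x2 = pm \<circ> l \<circ> iv pm" by (auto simp: AA_def)
  have "l \<noteq> id"
  proof
    assume "l = id" then have "snd x2 = pm \<circ> iv pm" using l by simp
    then show False using \<open>snd x2 \<noteq> id\<close> comp_iv_self[OF bij_pm] by simp
  qed
  note l = l this
  have ev: "evalN xs = (snd x1 \<circ> pm \<circ> l \<circ> iv pm) \<circ> evalN rest" using xs ys l by (simp add: comp_assoc)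
  show ?case
  proof (cases "rest = []")
    case True
    show ?thesis
      by (rule exI[of _ "[(snd x1, l)]"]) (use ev True gH l in simp)
  next
    case False
    have "fst (hd rest)" using t2r False t12 t1 by auto
    moreover have "\<not> fst (last rest)" using less.prems(4) xs ys False by simp
    moreover have "length rest < length xs" using xs ys by simp
    ultimately obtain ws where ws: "ws \<noteq> []" "set ws \<subseteq> (H - {id}) \<times> (L - {id})" "evalN rest = evalp pm ws"
      using less.hyps arest False by blast
    show ?thesis
      by (rule exI[of _ "ws @ [(snd x1, l)]"]) (use ev ws gH l evalp_snoc in auto)
  qed
qed

lemma twogrp_AA: "twogrp H AA"
proof
  show "pgrp H" by (rule pH)
  show "pgrp AA" by (rule pgrp_AA)
  show "\<And>h. h \<in> H \<Longrightarrow> h \<noteq> id \<Longrightarrow> finite (Fix h)" by (rule cH)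
  show "\<And>h. h \<in> AA \<Longrightarrow> h \<noteq> id \<Longrightarrow> finite (Fix h)" by (rule cof_AA)
  fix xs assume "alt H AA xs" "xs \<noteq> []" "fst (hd xs)" "\<not> fst (last xs)"
  then obtain ws where "ws \<noteq> []" "set ws \<subseteq> (H - {id}) \<times> (L - {id})" "evalN xs = evalp pm ws"
    using conv by blast
  then show "finite (Fix (evalN xs))" using fix_evalp_finite by simp
qed

lemma countable_AA: "countable AA"
  unfolding AA_def using ctL by blast

end

lemma extension_abstract:
  assumes "pgrp H" "pgrp L" "\<And>h. h \<in> H \<Longrightarrow> h \<noteq> id \<Longrightarrow> finite (Fix h)"
    "\<And>h. h \<in> L \<Longrightarrow> h \<noteq> id \<Longrightarrow> finite (Fix h)" "countable H" "countable L"
  shows "\<exists>p G. bij p \<and> pgrp G \<and> countable G \<and> H \<subseteq> G \<and> (\<forall>l\<in>L. p \<circ> l \<circ> iv p \<in> G)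
     \<and> (\<forall>f\<in>G. f = id \<or> finite (Fix f))"
proof -
  interpret gen H L using assms by unfold_locales
  interpret twogrp H AA by (rule twogrp_AA)
  show ?thesis
    apply (rule exI[of _ pm], rule exI[of _ "gen2 H AA"])
    using bij_pm gen2_pgrp[OF pH pgrp_AA] countable_gen2[OF ctH countable_AA] gen2_sub1[OF pH]
      gen2_sub2[OF pgrp_AA, of H] gen2_cof unfolding AA_def by blast
qed

locale regact = group K for K :: "nat monoid" (structure) +
  fixes e :: "nat \<times> nat \<Rightarrow> nat"
  assumes e: "bij_betw e (carrier K \<times> UNIV) UNIV"
begin

definition d :: "nat \<Rightarrow> nat \<times> nat" where "d = inv_into (carrier K \<times> UNIV) e"

lemma d_in: "d x \<in> carrier K \<times> UNIV"
  unfolding d_def using bij_betw_inv_into[OF e] by (auto simp: bij_betw_def)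

lemma e_d: "e (d x) = x"
  unfolding d_def using bij_betw_inv_into_right[OF e] by simp

lemma d_e: "c \<in> carrier K \<Longrightarrow> d (e (c, n)) = (c, n)"
  unfolding d_def using bij_betw_inv_into_left[OF e] by simp

definition rho :: "nat \<Rightarrow> nat \<Rightarrow> nat" where
  "rho k x = e (k \<otimes> fst (d x), snd (d x))"

lemma rho_mult: "k1 \<in> carrier K \<Longrightarrow> k2 \<in> carrier K \<Longrightarrow> rho k1 \<circ> rho k2 = rho (k1 \<otimes> k2)"
proof
  fix x assume k: "k1 \<in> carrier K" "k2 \<in> carrier K"
  have c: "fst (d x) \<in> carrier K" using d_in[of x] by auto
  then have "d (rho k2 x) = (k2 \<otimes> fst (d x), snd (d x))" unfolding rho_def using d_e k by simp
  then show "(rho k1 \<circ> rho k2) x = rho (k1 \<otimes> k2) x" using k c by (simp add: rho_def m_assoc)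
qed

lemma rho_one: "rho \<one> = id"
proof
  fix x
  have "fst (d x) \<in> carrier K" using d_in[of x] by auto
  then show "rho \<one> x = id x" unfolding rho_def using e_d[of x] by (simp add: prod.collapse)
qed

lemma rho_bij: "k \<in> carrier K \<Longrightarrow> bij (rho k)"
proof -
  assume k: "k \<in> carrier K"
  have "rho k \<circ> rho (inv k) = id" "rho (inv k) \<circ> rho k = id"
    using rho_mult k rho_one by auto
  then show ?thesis using o_bij by blast
qed

lemma rho_inv: "k \<in> carrier K \<Longrightarrow> iv (rho k) = rho (inv k)"
proof -
  assume k: "k \<in> carrier K"
  have "rho k \<circ> rho (inv k) = id" "rho (inv k) \<circ> rho k = id"
    using rho_mult k rho_one by auto
  then show ?thesis by (rule inv_unique_comp)
qed

lemma rho_fix: "k \<in> carrier K \<Longrightarrow> k \<noteq> \<one> \<Longrightarrow> Fix (rho k) = {}"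
proof (rule ccontr)
  assume k: "k \<in> carrier K" "k \<noteq> \<one>" and "Fix (rho k) \<noteq> {}"
  then obtain x where x: "rho k x = x" by (auto simp: Fix_def)
  have c: "fst (d x) \<in> carrier K" using d_in[of x] by auto
  have "e (k \<otimes> fst (d x), snd (d x)) = e (fst (d x), snd (d x))" using x e_d[of x] by (simp add: rho_def)
  then have "(k \<otimes> fst (d x), snd (d x)) = (fst (d x), snd (d x))"
    using e k c unfolding bij_betw_def inj_on_def by (meson SigmaI UNIV_I m_closed)
  then have "k \<otimes> fst (d x) = fst (d x)" by (metis fst_conv)
  then have "k = \<one>" using k c r_cancel_one by blast
  then show False using k by simp
qed

lemma rho_inj: "inj_on rho (carrier K)"
proof
  fix k1 k2 assume k: "k1 \<in> carrier K" "k2 \<in> carrier K" "rho k1 = rho k2"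
  have r: "rho k (e (\<one>, 0)) = e (k, 0)" if "k \<in> carrier K" for k
    using d_e[of \<one> 0] that by (simp add: rho_def)
  have "e (k1, 0) = e (k2, 0)" using r[OF k(1)] r[OF k(2)] k(3) by simp
  then show "k1 = k2" using e k unfolding bij_betw_def inj_on_def by blast
qed

lemma pgrp_L: "pgrp (rho ` carrier K)"
  unfolding pgrp_def
proof (intro conjI ballI)
  fix f assume "f \<in> rho ` carrier K" then show "bij f" using rho_bij by auto
next
  show "id \<in> rho ` carrier K" using rho_one by (metis image_eqI one_closed)
next
  fix f g assume "f \<in> rho ` carrier K" "g \<in> rho ` carrier K"
  then show "f \<circ> g \<in> rho ` carrier K" using rho_mult by auto
next
  fix f assume "f \<in> rho ` carrier K" then show "iv f \<in> rho ` carrier K" using rho_inv by auto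
qed

lemma cof_L: "f \<in> rho ` carrier K \<Longrightarrow> f \<noteq> id \<Longrightarrow> finite (Fix f)"
proof -
  assume f: "f \<in> rho ` carrier K" "f \<noteq> id"
  then obtain k where k: "k \<in> carrier K" "f = rho k" by blast
  then have "k \<noteq> \<one>" using f rho_one by blast
  then show ?thesis using rho_fix k by simp
qed

end

lemma exists_e:
  assumes "group (K :: nat monoid)" shows "\<exists>e. bij_betw e (carrier K \<times> (UNIV::nat set)) (UNIV::nat set)"
proof -
  have "\<one>\<^bsub>K\<^esub> \<in> carrier K" using assms group.is_monoid monoid.one_closed by blast
  have i: "infinite (carrier K \<times> (UNIV::nat set))"
  proof
    assume "finite (carrier K \<times> (UNIV::nat set))"
    then have "finite (UNIV::nat set)" using finite_cartesian_productD2 \<open>\<one>\<^bsub>K\<^esub> \<in> carrier K\<close> by blast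
    then show False by simp
  qed
  have c: "countable (carrier K \<times> (UNIV::nat set))" by (intro countable_SIGMA) auto
  obtain e where "bij_betw e (carrier K \<times> (UNIV::nat set)) (UNIV::nat set)" by (rule countableE_infinite[OF c i])
  then show ?thesis by blast
qed

lemma extension:
  assumes H: "pgrp H" "\<And>h. h \<in> H \<Longrightarrow> cofinitary h" "countable H" and K: "group (K :: nat monoid)"
  shows "\<exists>G. pgrp G \<and> countable G \<and> H \<subseteq> G \<and> (\<forall>f\<in>G. cofinitary f) \<and>
    (\<exists>h. h \<in> hom K SymN \<and> inj_on h (carrier K) \<and> h ` carrier K \<subseteq> G)"
proof -
  obtain e where e: "bij_betw e (carrier K \<times> (UNIV::nat set)) (UNIV::nat set)" using exists_e[OF K] by blast
  interpret regact K e using K e by (simp add: regact_def regact_axioms_def)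
  have cH: "\<And>h. h \<in> H \<Longrightarrow> h \<noteq> id \<Longrightarrow> finite (Fix h)" using H(2) by (auto simp: cofinitary_def Fix_def)
  have ctL: "countable (rho ` carrier K)" by auto
  obtain p G where pG: "bij p" "pgrp G" "countable G" "H \<subseteq> G" "\<forall>l\<in>rho ` carrier K. p \<circ> l \<circ> iv p \<in> G"
      "\<forall>f\<in>G. f = id \<or> finite (Fix f)"
    using extension_abstract[OF H(1) pgrp_L cH cof_L H(3) ctL] by blast
  define h where "h = (\<lambda>k. p \<circ> rho k \<circ> iv p)"
  have hb: "bij (h k)" if "k \<in> carrier K" for k
    unfolding h_def using pG(1) rho_bij[OF that] by (simp add: bij_comp bij_imp_bij_inv)
  have hom: "h \<in> hom K SymN"
    unfolding hom_def
  proof (intro CollectI conjI ballI)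
    show "h \<in> carrier K \<rightarrow> carrier SymN" using hb carrier_SymN by auto
  next
    fix x y assume xy: "x \<in> carrier K" "y \<in> carrier K"
    have "h x \<otimes>\<^bsub>SymN\<^esub> h y = h x \<circ> h y" using hb xy mult_SymN by blast
    also have "\<dots> = p \<circ> (rho x \<circ> rho y) \<circ> iv p" unfolding h_def using conj_comp[OF pG(1)] by simp
    also have "\<dots> = h (x \<otimes>\<^bsub>K\<^esub> y)" unfolding h_def using rho_mult xy by simp
    finally show "h (x \<otimes>\<^bsub>K\<^esub> y) = h x \<otimes>\<^bsub>SymN\<^esub> h y" by simp
  qed
  have inj: "inj_on h (carrier K)"
  proof
    fix x y assume xy: "x \<in> carrier K" "y \<in> carrier K" "h x = h y"
    then have "iv p \<circ> (p \<circ> rho x \<circ> iv p) \<circ> p = iv p \<circ> (p \<circ> rho y \<circ> iv p) \<circ> p" by (simp add: h_def)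
    then have "(iv p \<circ> p) \<circ> rho x \<circ> (iv p \<circ> p) = (iv p \<circ> p) \<circ> rho y \<circ> (iv p \<circ> p)" by (simp add: comp_assoc)
    then have "rho x = rho y" using iv_comp_self[OF pG(1)] by simp
    then show "x = y" using rho_inj xy by (meson inj_onD)
  qed
  have sub: "h ` carrier K \<subseteq> G" using pG(5) by (auto simp: h_def)
  have cof: "\<forall>f\<in>G. cofinitary f" using pG(6) by (auto simp: cofinitary_def Fix_def)
  show ?thesis using pG hom inj sub cof by blast
qed

definition enc :: "nat monoid \<Rightarrow> nat set" where
  "enc K = {to_nat (0::nat, n, 0::nat) | n. n \<in> carrier K}
     \<union> {to_nat (1::nat, prod_encode (a,b), mult K a b) | a b. True}
     \<union> {to_nat (2::nat, one K, 0::nat)}"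

lemma enc_carrier: "to_nat (0::nat, n, 0::nat) \<in> enc K \<longleftrightarrow> n \<in> carrier K"
  by (auto simp: enc_def)

lemma enc_mult: "to_nat (1::nat, prod_encode (a,b), c) \<in> enc K \<longleftrightarrow> c = mult K a b"
  by (auto simp: enc_def prod_encode_eq)

lemma enc_one: "to_nat (2::nat, c, 0::nat) \<in> enc K \<longleftrightarrow> c = one K"
  by (auto simp: enc_def)

lemma inj_enc: "inj enc"
proof
  fix K1 K2 :: "nat monoid" assume e: "enc K1 = enc K2"
  have "carrier K1 = carrier K2" using e enc_carrier by blast
  moreover have "mult K1 = mult K2"
  proof (intro ext)
    fix a b
    have "to_nat (1::nat, prod_encode (a,b), mult K1 a b) \<in> enc K1" by (simp only: enc_mult)
    then have "to_nat (1::nat, prod_encode (a,b), mult K1 a b) \<in> enc K2" using e by simp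
    then show "mult K1 a b = mult K2 a b" by (simp only: enc_mult)
  qed
  moreover have "one K1 = one K2" using e enc_one[of "one K1" K1] enc_one[of "one K1" K2] by simp
  ultimately show "K1 = K2" by (intro monoid.equality) auto
qed

lemma exists_inj_real: "\<exists>\<phi> :: nat monoid \<Rightarrow> real. inj \<phi>"
proof -
  obtain f :: "nat set \<Rightarrow> real" where "bij_betw f UNIV UNIV"
    using nat_sets_eqpoll_reals unfolding eqpoll_def by blast
  then have "inj f" by (simp add: bij_betw_def)
  then have "inj (f \<circ> enc)" using inj_enc by (simp add: inj_compose)
  then show ?thesis by blast
qed

lemma CH_order:
  assumes ch: CH
  shows "\<exists>T :: real rel. wf T \<and> (\<forall>u v. u \<noteq> v \<longrightarrow> (u,v) \<in> T \<or> (v,u) \<in> T) \<and> (\<forall>v. countable {u. (u,v) \<in> T})"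
proof -
  obtain W :: "real rel" where W: "well_order_on UNIV W" using well_order_on by blast
  define S where "S = W - Id"
  have wfS: "wf S" using W by (simp add: well_order_on_def S_def)
  have totS: "\<forall>u v. u \<noteq> v \<longrightarrow> (u,v) \<in> S \<or> (v,u) \<in> S"
    using W by (auto simp: S_def well_order_on_def linear_order_on_def total_on_def)
  define U where "U = {x. uncountable {y. (y,x) \<in> S}}"
  show ?thesis
  proof (cases "U = {}")
    case True
    then show ?thesis using wfS totS by (auto simp: U_def)
  next
    case False
    then obtain x0 where x0: "x0 \<in> U" "\<forall>y. (y,x0) \<in> S \<longrightarrow> y \<notin> U"
      using wfE_min[OF wfS] by (metis ex_in_conv)
    define A0 where "A0 = {y. (y,x0) \<in> S}"
    have "uncountable A0" using x0 by (simp add: U_def A0_def)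
    then have "A0 \<approx> (UNIV :: real set)" using ch unfolding CH_def by blast
    then obtain f where f: "bij_betw f A0 (UNIV :: real set)" unfolding eqpoll_def by blast
    define g where "g = inv_into A0 f"
    have g: "bij_betw g UNIV A0" unfolding g_def using bij_betw_inv_into[OF f] .
    define T where "T = inv_image S g"
    have "wf T" unfolding T_def using wfS by simp
    moreover have "\<forall>u v. u \<noteq> v \<longrightarrow> (u,v) \<in> T \<or> (v,u) \<in> T"
    proof (intro allI impI)
      fix u v :: real assume "u \<noteq> v"
      then have "g u \<noteq> g v" using g by (auto simp: bij_betw_def inj_on_def)
      then show "(u,v) \<in> T \<or> (v,u) \<in> T" using totS by (simp add: T_def)
    qed
    moreover have "\<forall>v. countable {u. (u,v) \<in> T}"
    proof
      fix v
      have "g v \<in> A0" using g by (auto simp: bij_betw_def)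
      then have "g v \<notin> U" using x0 by (simp add: A0_def)
      then have c: "countable {y. (y, g v) \<in> S}" by (simp add: U_def)
      have "g ` {u. (u,v) \<in> T} \<subseteq> {y. (y, g v) \<in> S}" by (auto simp: T_def)
      then have "countable (g ` {u. (u,v) \<in> T})" using c countable_subset by blast
      moreover have "inj_on g {u. (u,v) \<in> T}" using g by (auto simp: bij_betw_def inj_on_def)
      ultimately show "countable {u. (u,v) \<in> T}" by (rule countable_image_inj_on)
    qed
    ultimately show ?thesis by blast
  qed
qed

lemma CH_order_monoid:
  assumes ch: CH
  shows "\<exists>R :: nat monoid rel. wf R \<and> (\<forall>u v. u \<noteq> v \<longrightarrow> (u,v) \<in> R \<or> (v,u) \<in> R) \<and> (\<forall>v. countable {u. (u,v) \<in> R})"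
proof -
  obtain T :: "real rel" where T: "wf T" "\<forall>u v. u \<noteq> v \<longrightarrow> (u,v) \<in> T \<or> (v,u) \<in> T" "\<forall>v. countable {u. (u,v) \<in> T}"
    using CH_order[OF ch] by blast
  obtain \<phi> :: "nat monoid \<Rightarrow> real" where phi: "inj \<phi>" using exists_inj_real by blast
  define R where "R = inv_image T \<phi>"
  have "wf R" unfolding R_def using T(1) by simp
  moreover have "\<forall>u v. u \<noteq> v \<longrightarrow> (u,v) \<in> R \<or> (v,u) \<in> R"
    using T(2) phi by (auto simp: R_def inj_def)
  moreover have "\<forall>v. countable {u. (u,v) \<in> R}"
  proof
    fix v
    have "\<phi> ` {u. (u,v) \<in> R} \<subseteq> {x. (x, \<phi> v) \<in> T}" by (auto simp: R_def)
    then have "countable (\<phi> ` {u. (u,v) \<in> R})" using T(3) countable_subset by blast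
    then show "countable {u. (u,v) \<in> R}" using phi countable_image_inj_on by (metis inj_on_subset subset_UNIV)
  qed
  ultimately show ?thesis by blast
qed

definition emb :: "nat monoid \<Rightarrow> (nat \<Rightarrow> nat) set \<Rightarrow> bool" where
  "emb K G \<longleftrightarrow> (\<exists>h. h \<in> hom K SymN \<and> inj_on h (carrier K) \<and> h ` carrier K \<subseteq> G)"

definition cofset :: "(nat \<Rightarrow> nat) set \<Rightarrow> bool" where
  "cofset G \<longleftrightarrow> pgrp G \<and> (\<forall>f\<in>G. cofinitary f)"

definition ext_ok :: "(nat \<Rightarrow> nat) set \<Rightarrow> nat monoid \<Rightarrow> (nat \<Rightarrow> nat) set \<Rightarrow> bool" where
  "ext_ok U K G \<longleftrightarrow> cofset G \<and> countable G \<and> U \<subseteq> G \<and> (group K \<longrightarrow> emb K G)"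

lemma ext_exists: "cofset U \<Longrightarrow> countable U \<Longrightarrow> \<exists>G. ext_ok U K G"
proof -
  assume u: "cofset U" "countable U"
  show ?thesis
  proof (cases "group K")
    case True
    have p: "pgrp U" and c: "\<And>h. h \<in> U \<Longrightarrow> cofinitary h" using u unfolding cofset_def by auto
    from extension[OF p c u(2) True] obtain G where G: "pgrp G" "countable G" "U \<subseteq> G" "\<forall>f\<in>G. cofinitary f"
      "\<exists>h. h \<in> hom K SymN \<and> inj_on h (carrier K) \<and> h ` carrier K \<subseteq> G"
      by blast
    have "ext_ok U K G" unfolding ext_ok_def cofset_def emb_def using G by simp
    then show ?thesis by blast
  next
    case False
    then have "ext_ok U K U" using u unfolding ext_ok_def by blast
    then show ?thesis by blast
  qed
qed

lemma pgrpD: assumes "pgrp X"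
  shows "f \<in> X \<Longrightarrow> bij f" "id \<in> X" "f \<in> X \<Longrightarrow> g \<in> X \<Longrightarrow> f \<circ> g \<in> X" "f \<in> X \<Longrightarrow> iv f \<in> X"
  using assms unfolding pgrp_def by auto

lemma union_chain_pgrp:
  assumes ne: "C \<noteq> {}" and p: "\<And>X. X \<in> C \<Longrightarrow> pgrp X" and ch: "\<And>X Y. X \<in> C \<Longrightarrow> Y \<in> C \<Longrightarrow> X \<subseteq> Y \<or> Y \<subseteq> X"
  shows "pgrp (\<Union>C)"
  unfolding pgrp_def
proof (intro conjI ballI)
  fix f assume "f \<in> \<Union>C" then obtain X where X: "X \<in> C" "f \<in> X" by blast
  show "bij f" using pgrpD(1)[OF p[OF X(1)] X(2)] .
next
  obtain X where X: "X \<in> C" using ne by blast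
  show "id \<in> \<Union>C" using pgrpD(2)[OF p[OF X]] X by blast
next
  fix f g assume "f \<in> \<Union>C" "g \<in> \<Union>C"
  then obtain X Y where XY: "X \<in> C" "Y \<in> C" "f \<in> X" "g \<in> Y" by blast
  show "f \<circ> g \<in> \<Union>C"
  proof (cases "X \<subseteq> Y")
    case True
    then have "f \<circ> g \<in> Y" using pgrpD(3)[OF p[OF XY(2)]] XY by blast
    then show ?thesis using XY by blast
  next
    case False then have "Y \<subseteq> X" using ch XY by blast
    then have "f \<circ> g \<in> X" using pgrpD(3)[OF p[OF XY(1)]] XY by blast
    then show ?thesis using XY by blast
  qed
next
  fix f assume "f \<in> \<Union>C" then obtain X where X: "X \<in> C" "f \<in> X" by blast
  then have "iv f \<in> X" using pgrpD(4)[OF p[OF X(1)]] by blast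
  then show "iv f \<in> \<Union>C" using X by blast
qed

lemma union_chain_cofset:
  assumes ne: "C \<noteq> {}" and p: "\<And>X. X \<in> C \<Longrightarrow> cofset X" and ch: "\<And>X Y. X \<in> C \<Longrightarrow> Y \<in> C \<Longrightarrow> X \<subseteq> Y \<or> Y \<subseteq> X"
  shows "cofset (\<Union>C)"
proof -
  have "pgrp (\<Union>C)" using union_chain_pgrp[OF ne _ ch] p unfolding cofset_def by blast
  moreover have "\<forall>f\<in>\<Union>C. cofinitary f" using p unfolding cofset_def by blast
  ultimately show ?thesis unfolding cofset_def by blast
qed

locale chainc =
  fixes R :: "nat monoid rel"
  assumes wfR: "wf R" and totR: "\<And>u v. u \<noteq> v \<Longrightarrow> (u,v) \<in> R \<or> (v,u) \<in> R"
    and ctR: "\<And>v. countable {u. (u,v) \<in> R}"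
begin

definition F :: "(nat monoid \<Rightarrow> (nat \<Rightarrow> nat) set) \<Rightarrow> nat monoid \<Rightarrow> (nat \<Rightarrow> nat) set" where
  "F f K = (SOME G. ext_ok (insert id (\<Union>{f K' | K'. (K',K) \<in> R})) K G)"

definition Gs :: "nat monoid \<Rightarrow> (nat \<Rightarrow> nat) set" where "Gs = wfrec R F"

lemma Gs_eq: "Gs K = F Gs K"
proof -
  have "Gs K = F (cut Gs R K) K" unfolding Gs_def by (rule wfrec[OF wfR])
  moreover have "{cut Gs R K K' | K'. (K',K) \<in> R} = {Gs K' | K'. (K',K) \<in> R}"
  proof -
    have "\<And>K'. (K',K) \<in> R \<Longrightarrow> cut Gs R K K' = Gs K'" by (rule cut_apply)
    then show ?thesis by (metis (no_types, lifting))
  qed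
  ultimately show ?thesis by (simp add: F_def)
qed

lemma Gs_props: "cofset (Gs K) \<and> countable (Gs K) \<and> (\<forall>K'. (K',K) \<in> R \<longrightarrow> Gs K' \<subseteq> Gs K) \<and> (group K \<longrightarrow> emb K (Gs K))"
proof (induction K rule: wf_induct_rule[OF wfR])
  case (1 K)
  define U where "U = insert id (\<Union>{Gs K' | K'. (K',K) \<in> R})"
  have cU: "cofset U"
  proof -
    let ?C = "insert {id} {Gs K' | K'. (K',K) \<in> R}"
    have "U = \<Union>?C" by (auto simp: U_def)
    moreover have "cofset {id}" by (auto simp: cofset_def pgrp_def cofinitary_def)
    moreover have ch: "X \<subseteq> Y \<or> Y \<subseteq> X" if X: "X \<in> ?C" and Y: "Y \<in> ?C" for X Y
    proof -
      show "X \<subseteq> Y \<or> Y \<subseteq> X"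
      proof (cases "X = {id} \<or> Y = {id}")
        case True
        have "\<forall>Z\<in>?C. id \<in> Z"
        proof
          fix Z assume "Z \<in> ?C"
          then have "Z = {id} \<or> (\<exists>K'. Z = Gs K' \<and> (K',K) \<in> R)" by blast
          then show "id \<in> Z"
          proof
            assume "\<exists>K'. Z = Gs K' \<and> (K',K) \<in> R"
            then obtain K' where "Z = Gs K'" "(K',K) \<in> R" by blast
            then show "id \<in> Z" using 1 pgrpD(2) unfolding cofset_def by blast
          qed simp
        qed
        then show ?thesis using True X Y by blast
      next
        case False
        then obtain K1 K2 where k: "X = Gs K1" "Y = Gs K2" "(K1,K) \<in> R" "(K2,K) \<in> R" using X Y by auto
        show ?thesis
        proof (cases "K1 = K2")
          case True then show ?thesis using k by simp
        next
          case False
          then have "(K1,K2) \<in> R \<or> (K2,K1) \<in> R" using totR by blast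
          then show ?thesis using 1 k by blast
        qed
      qed
    qed
    have cC: "cofset Z" if "Z \<in> ?C" for Z
    proof -
      have "Z = {id} \<or> (\<exists>K'. Z = Gs K' \<and> (K',K) \<in> R)" using that by blast
      then show ?thesis
      proof
        assume "\<exists>K'. Z = Gs K' \<and> (K',K) \<in> R"
        then obtain K' where "Z = Gs K'" "(K',K) \<in> R" by blast
        then show ?thesis using 1 by blast
      qed (use \<open>cofset {id}\<close> in simp)
    qed
    have "cofset (\<Union>?C)" by (rule union_chain_cofset[OF _ cC ch]) auto
    then show ?thesis using \<open>U = \<Union>?C\<close> by simp
  qed
  have ctU: "countable U"
  proof -
    have e: "\<Union>{Gs K' | K'. (K',K) \<in> R} = (\<Union>K'\<in>{K'. (K',K) \<in> R}. Gs K')" by blast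
    have "countable (\<Union>K'\<in>{K'. (K',K) \<in> R}. Gs K')"
      by (rule countable_UN[OF ctR]) (use 1 in blast)
    then show ?thesis unfolding U_def e by simp
  qed
  obtain G where G: "ext_ok U K G" using ext_exists[OF cU ctU] by blast
  have "ext_ok U K (Gs K)"
    using Gs_eq[of K] someI[of "ext_ok U K", OF G] by (simp add: F_def U_def)
  then show ?case by (auto simp: ext_ok_def U_def)
qed

definition Gstar where "Gstar = \<Union>(range Gs)"

lemma Gstar_cofset: "cofset Gstar"
  unfolding Gstar_def
proof (rule union_chain_cofset)
  show "range Gs \<noteq> {}" by simp
  show "\<And>X. X \<in> range Gs \<Longrightarrow> cofset X" using Gs_props by blast
  show "\<And>X Y. X \<in> range Gs \<Longrightarrow> Y \<in> range Gs \<Longrightarrow> X \<subseteq> Y \<or> Y \<subseteq> X"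
  proof -
    fix X Y assume "X \<in> range Gs" "Y \<in> range Gs"
    then obtain K1 K2 where k: "X = Gs K1" "Y = Gs K2" by blast
    show "X \<subseteq> Y \<or> Y \<subseteq> X"
    proof (cases "K1 = K2")
      case True then show ?thesis using k by simp
    next
      case False then show ?thesis using totR Gs_props k by blast
    qed
  qed
qed

lemma Gstar_emb: "group K \<Longrightarrow> emb K Gstar"
proof -
  assume "group K"
  then have "emb K (Gs K)" using Gs_props[of K] by blast
  then obtain h where h: "h \<in> hom K SymN" "inj_on h (carrier K)" "h ` carrier K \<subseteq> Gs K" unfolding emb_def by blast
  have "Gs K \<subseteq> Gstar" unfolding Gstar_def by blast
  then show ?thesis unfolding emb_def using h by blast
qed

end

lemma maximal_exists:
  assumes g0: "cofset G0"
  shows "\<exists>M. maximal_cofinitary_group M \<and> G0 \<subseteq> M"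
proof -
  let ?A = "{G. cofset G \<and> G0 \<subseteq> G}"
  have "\<exists>M\<in>?A. \<forall>X\<in>?A. M \<subseteq> X \<longrightarrow> X = M"
  proof (rule Zorn_Lemma2, intro ballI)
    fix C assume C: "C \<in> chains ?A"
    have CA: "C \<subseteq> ?A" using C unfolding chains_def by simp
    have Cch: "\<And>X Y. X \<in> C \<Longrightarrow> Y \<in> C \<Longrightarrow> X \<subseteq> Y \<or> Y \<subseteq> X"
      using C unfolding chains_def chain_subset_def by simp
    show "\<exists>U\<in>?A. \<forall>X\<in>C. X \<subseteq> U"
    proof (cases "C = {}")
      case True
      have "G0 \<in> ?A" using g0 by blast
      then show ?thesis using True by blast
    next
      case False
      have cC: "\<And>X. X \<in> C \<Longrightarrow> cofset X" using CA by blast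
      have "cofset (\<Union>C)" by (rule union_chain_cofset[OF False cC Cch])
      moreover have "G0 \<subseteq> \<Union>C" using False CA by blast
      ultimately have "\<Union>C \<in> ?A" by blast
      then show ?thesis by blast
    qed
  qed
  then obtain M where M: "M \<in> ?A" and Mmax0: "\<forall>X\<in>?A. M \<subseteq> X \<longrightarrow> X = M" by (rule bexE)
  have Mmax: "\<And>X. cofset X \<Longrightarrow> G0 \<subseteq> X \<Longrightarrow> M \<subseteq> X \<Longrightarrow> X = M" using Mmax0 by simp
  have M: "cofset M" "G0 \<subseteq> M" using M by simp_all
  have "maximal_cofinitary_group M"
    unfolding maximal_cofinitary_group_def
  proof (intro conjI allI impI)
    show "cofinitary_group M" using M(1) unfolding cofinitary_group_def subgroup_SymN_iff cofset_def by blast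
  next
    fix X assume X: "cofinitary_group X \<and> M \<subseteq> X"
    then have "cofset X" unfolding cofinitary_group_def subgroup_SymN_iff cofset_def by blast
    moreover have "G0 \<subseteq> X" using X M(2) by blast
    ultimately show "X = M" using Mmax X by simp
  qed
  then show ?thesis using M by blast
qed

theorem mainTheorem12:
  assumes "CH"
  shows "\<exists>G. maximal_cofinitary_group G \<and>
           (\<forall>K :: nat monoid. group K \<longrightarrow>
              (\<exists>h. h \<in> hom K SymN \<and> inj_on h (carrier K) \<and> h ` carrier K \<subseteq> G))"
proof -
  obtain R :: "nat monoid rel" where R: "wf R" "\<forall>u v. u \<noteq> v \<longrightarrow> (u,v) \<in> R \<or> (v,u) \<in> R" "\<forall>v. countable {u. (u,v) \<in> R}"
    using CH_order_monoid[OF assms] by blast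
  interpret chainc R using R by unfold_locales auto
  obtain M where M: "maximal_cofinitary_group M" "Gstar \<subseteq> M" using maximal_exists[OF Gstar_cofset] by blast
  have "\<forall>K :: nat monoid. group K \<longrightarrow> (\<exists>h. h \<in> hom K SymN \<and> inj_on h (carrier K) \<and> h ` carrier K \<subseteq> M)"
    using Gstar_emb M(2) unfolding emb_def by blast
  then show ?thesis using M(1) by blast
qed

end
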